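(* Let $n,n_1,n_2$ be positive integers with $n_1,n_2\le 10^{-6}n$. Let $M$ be an $n\times n$ random matrix whose entries are independent, each with mean $0$, variance at most $\sigma^2$ where $\sigma\ge 20/\sqrt n$, and each almost surely in $[-1,1]$. Then with probability at least $1-e^{-8(n_1+n_2)\log(n/n_1+n/n_2)}$, for every $I,J\subseteq[n]$ with $|I|=n_1$, $|J|=n_2$, we have $\big|\sum_{i\in I,j\in J}M_{ij}\big|\le (n_1+n_2)\sigma\sqrt n$. *)

theory Defs
  imports "HOL-Probability.Probability"
begin

end

theory Submission
  imports Defs
begin


lemma exp_quad_bound:
  fixes l x :: real
  assumes "l \<ge> 0" "\<bar>x\<bar> \<le> 1"
  shows "exp (l*x) \<le> 1 + l*x + x\<^sup>2 * (exp l - 1 - l)"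
proof -
  have e1: "(\<lambda>i. (l*x)^(i+2) / fact (i+2)) sums (exp (l*x) - (1 + l*x))"
  proof -
    have "(\<lambda>i. (l*x)^i / fact i) sums exp (l*x)"
      using exp_converges[of "l*x"] by (simp add: divide_inverse mult.commute)
    then have "(\<lambda>i. (l*x)^i / fact i) sums ((exp (l*x) - (1 + l*x)) + (\<Sum>i<2. (l*x)^i / fact i))"
      by (simp add: numeral_2_eq_2)
    then show ?thesis by (subst sums_iff_shift) 
  qed
  have e2: "(\<lambda>i. x\<^sup>2 * (l^(i+2) / fact (i+2))) sums (x\<^sup>2 * (exp l - (1 + l)))"
  proof -
    have "(\<lambda>i. l^i / fact i) sums exp l"
      using exp_converges[of "l"] by (simp add: divide_inverse mult.commute)
    then have "(\<lambda>i. l^i / fact i) sums ((exp l - (1 + l)) + (\<Sum>i<2. l^i / fact i))"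
      by (simp add: numeral_2_eq_2)
    then have "(\<lambda>i. l^(i+2) / fact (i+2)) sums (exp l - (1 + l))" by (subst sums_iff_shift) 
    then show ?thesis by (rule sums_mult)
  qed
  have "\<And>i. (l*x)^(i+2) / fact (i+2) \<le> x\<^sup>2 * (l^(i+2) / fact (i+2))"
  proof -
    fix i :: nat
    have "x^(i+2) \<le> \<bar>x\<bar>^(i+2)" by (metis power_abs abs_ge_self)
    also have "\<dots> = \<bar>x\<bar>^i * x\<^sup>2" by (simp add: power_add power2_eq_square abs_mult_self_eq)
    also have "\<dots> \<le> 1 * x\<^sup>2" by (intro mult_right_mono) (use assms in \<open>auto intro: power_le_one\<close>)
    finally have "x^(i+2) \<le> x\<^sup>2" by simp
    then have "l^(i+2) * x^(i+2) \<le> l^(i+2) * x\<^sup>2" using assms by (intro mult_left_mono) auto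
    then have "(l*x)^(i+2) \<le> x\<^sup>2 * l^(i+2)" by (simp add: power_mult_distrib mult_ac)
    then show "(l*x)^(i+2) / fact (i+2) \<le> x\<^sup>2 * (l^(i+2) / fact (i+2))"
      by (metis divide_right_mono fact_ge_zero times_divide_eq_right)
  qed
  from sums_le[OF this e1 e2] show ?thesis by (simp add: algebra_simps)
qed

lemma (in prob_space) mgf_bound:
  assumes [measurable]: "Y \<in> borel_measurable M"
    and bd: "AE x in M. \<bar>Y x\<bar> \<le> 1" and m0: "expectation Y = 0"
    and v: "expectation (\<lambda>x. (Y x)\<^sup>2) \<le> v" and l: "l \<ge> 0"
  shows "(\<integral>\<^sup>+x. ennreal (exp (l * Y x)) \<partial>M) \<le> ennreal (exp (v * (exp l - 1 - l)))"
proof -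
  define g where "g = exp l - 1 - l"
  have g: "g \<ge> 0" using exp_ge_add_one_self[of l] unfolding g_def by linarith
  have iY: "integrable M Y"
    by (rule integrable_const_bound[where B=1]) (use bd in auto)
  have iY2: "integrable M (\<lambda>x. (Y x)\<^sup>2)"
    by (rule integrable_const_bound[where B=1]) (use bd in \<open>eventually_elim, auto simp: abs_square_le_1\<close>)
  have iE: "integrable M (\<lambda>x. exp (l * Y x))"
  proof (rule integrable_const_bound[where B="exp l"])
    show "AE x in M. norm (exp (l * Y x)) \<le> exp l"
      using bd by eventually_elim (use l in \<open>auto intro: mult_left_le simp: abs_le_iff\<close>)
  qed auto
  have iR: "integrable M (\<lambda>x. 1 + l * Y x + (Y x)\<^sup>2 * g)"
    using iY iY2 by auto
  have "(\<integral>\<^sup>+x. ennreal (exp (l * Y x)) \<partial>M) = ennreal (expectation (\<lambda>x. exp (l * Y x)))"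
    by (rule nn_integral_eq_integral[OF iE]) auto
  also have "expectation (\<lambda>x. exp (l * Y x)) \<le> expectation (\<lambda>x. 1 + l * Y x + (Y x)\<^sup>2 * g)"
    by (rule integral_mono_AE[OF iE iR])
       (use bd in \<open>eventually_elim, use l exp_quad_bound in \<open>auto simp: g_def\<close>\<close>)
  also have "expectation (\<lambda>x. 1 + l * Y x + (Y x)\<^sup>2 * g) = 1 + l * expectation Y + expectation (\<lambda>x. (Y x)\<^sup>2) * g"
    using iY iY2 by (simp add: prob_space)
  also have "\<dots> \<le> 1 + v * g" using m0 v g by (simp add: mult_right_mono)
  also have "\<dots> \<le> exp (v * g)" by (rule exp_ge_add_one_self)
  finally show ?thesis by (simp add: g_def ennreal_leI)
qed


lemma (in prob_space) bennett_tail: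
  assumes fin: "finite K" and indep: "indep_vars (\<lambda>_. borel) Y K"
    and bd: "\<And>k. k \<in> K \<Longrightarrow> AE x in M. \<bar>Y k x\<bar> \<le> 1"
    and m0: "\<And>k. k \<in> K \<Longrightarrow> expectation (Y k) = 0"
    and v: "\<And>k. k \<in> K \<Longrightarrow> expectation (\<lambda>x. (Y k x)\<^sup>2) \<le> v"
    and l: "l > 0"
  shows "prob {x\<in>space M. (\<Sum>k\<in>K. Y k x) \<ge> t} \<le> exp (- l * t + real (card K) * v * (exp l - 1 - l))"
proof -
  have [measurable]: "\<And>k. k \<in> K \<Longrightarrow> Y k \<in> borel_measurable M"
    using indep unfolding indep_vars_def by blast
  have "ennreal (prob {x\<in>space M. (\<Sum>k\<in>K. Y k x) \<ge> t}) = emeasure M {x\<in>space M. (\<Sum>k\<in>K. Y k x) \<ge> t}"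
    by (simp add: emeasure_eq_measure)
  also have "\<dots> \<le> ennreal (exp (-l*t)) * (\<integral>\<^sup>+x\<in>space M. exp (l * (\<Sum>k\<in>K. Y k x)) \<partial>M)"
    by (intro Chernoff_ineq_nn_integral_ge l) auto
  also have "(\<integral>\<^sup>+x\<in>space M. exp (l * (\<Sum>k\<in>K. Y k x)) \<partial>M) =
             (\<integral>\<^sup>+x. (\<Prod>k\<in>K. ennreal (exp (l * Y k x))) \<partial>M)"
    by (intro nn_integral_cong)
       (simp_all add: sum_distrib_left exp_sum fin prod_ennreal)
  also have "\<dots> = (\<Prod>k\<in>K. \<integral>\<^sup>+x. ennreal (exp (l * Y k x)) \<partial>M)"
    by (intro indep_vars_nn_integral fin indep_vars_compose2[OF indep]) auto
  also have "ennreal (exp (-l * t)) * \<dots> \<le>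
               ennreal (exp (-l * t)) * (\<Prod>k\<in>K. ennreal (exp (v * (exp l - 1 - l))))"
  proof (intro mult_left_mono prod_mono_ennreal)
    fix k assume k: "k \<in> K"
    show "(\<integral>\<^sup>+x. ennreal (exp (l * Y k x)) \<partial>M) \<le> ennreal (exp (v * (exp l - 1 - l)))"
      by (rule mgf_bound) (use k bd m0 v l in auto)
  qed auto
  also have "\<dots> = ennreal (exp (-l*t) * (\<Prod>k\<in>K. exp (v * (exp l - 1 - l))))"
    by (simp add: ennreal_power ennreal_mult)
  also have "exp (-l*t) * (\<Prod>k\<in>K. exp (v * (exp l - 1 - l))) = exp (- l * t + real (card K) * v * (exp l - 1 - l))"
    by (simp add: exp_add exp_of_nat_mult[symmetric] mult_ac exp_diff exp_minus divide_inverse)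
  finally show ?thesis
    by (subst (asm) ennreal_le_iff) simp_all
qed



lemma pow_fact_le_exp:
  fixes x :: real assumes "x \<ge> 0"
  shows "x^k / fact k \<le> exp x"
proof -
  have s: "(\<lambda>i. x^i / fact i) sums exp x"
    using exp_converges[of x] by (simp add: divide_inverse mult.commute)
  have "(\<Sum>i\<in>{k}. x^i / fact i) \<le> (\<Sum>i. x^i / fact i)"
    by (rule sum_le_suminf) (use s assms in \<open>auto simp: sums_iff\<close>)
  then show ?thesis using s by (simp add: sums_iff)
qed

lemma choose_le_exp_bound:
  fixes n a :: nat assumes "a > 0"
  shows "real (n choose a) \<le> (exp 1 * real n / real a) ^ a"
proof -
  have "real (n choose a) * fact a \<le> real n ^ a"
    using binomial_fact_pow[of n a] by (metis of_nat_fact of_nat_le_iff of_nat_mult of_nat_power)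
  then have "real (n choose a) \<le> real n ^ a / fact a"
    by (simp add: field_simps)
  also have "\<dots> = (real n / real a)^a * (real a ^ a / fact a)"
    using assms by (simp add: field_simps power_divide)
  also have "\<dots> \<le> (real n / real a)^a * exp (real a)"
    by (intro mult_left_mono pow_fact_le_exp) auto
  also have "exp (real a) = exp 1 ^ a" by (simp add: exp_of_nat_mult[symmetric])
  also have "(real n / real a)^a * exp 1 ^ a = (exp 1 * real n / real a) ^ a"
    by (simp add: power_mult_distrib[symmetric] mult_ac)
  finally show ?thesis .
qed



lemma final_arith:
  fixes n a b :: nat and \<tau> :: real
  assumes a: "a > 0" and b: "b > 0" and an: "real a \<le> real n / 10^6" and bn: "real b \<le> real n / 10^6"
    and t1: "20 / sqrt (real n) \<le> \<tau>" and t2: "\<tau> \<le> 1"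
  shows "real (n choose a) * real (n choose b) *
     (2 * exp (- (10 * ln (real n / real a + real n / real b) / (\<tau> * sqrt (real n))) * (real (a+b) * (\<tau> * sqrt (real n)))
        + real (a*b) * \<tau>\<^sup>2 * (exp (10 * ln (real n / real a + real n / real b) / (\<tau> * sqrt (real n))) - 1
            - 10 * ln (real n / real a + real n / real b) / (\<tau> * sqrt (real n)))))
     \<le> exp (-8 * real (a+b) * ln (real n / real a + real n / real b))"
proof -
  define s where "s = real (a+b)"
  define R where "R = real n / real a + real n / real b"
  define L where "L = ln R"
  define \<rho> where "\<rho> = \<tau> * sqrt (real n)"
  define l where "l = 10 * L / \<rho>"
  have n6: "real n \<ge> 10^6" using an a by (simp add: field_simps)
  have npos: "real n > 0" using n6 by simp
  have sq: "sqrt (real n) \<ge> 1000"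
    using real_sqrt_le_mono[OF n6] by (simp add: real_sqrt_power[symmetric] power_mult[symmetric])
  have taupos: "\<tau> > 0" using t1 npos by (smt (verit) divide_pos_pos real_sqrt_gt_zero)
  have rho20: "\<rho> \<ge> 20" using t1 sq npos unfolding \<rho>_def by (simp add: divide_le_eq)
  have Rge: "R \<ge> 2 * 10^6"
  proof -
    have "real n / real a \<ge> 10^6" using an a by (simp add: field_simps)
    moreover have "real n / real b \<ge> 10^6" using bn b by (simp add: field_simps)
    ultimately show ?thesis unfolding R_def by simp
  qed
  have Rpos: "R > 0" using Rge by simp
  have expL: "exp L = R" using Rpos by (simp add: L_def)
  have L3: "L \<ge> 3"
  proof -
    have "exp (3::real) = exp 1 ^ 3" by (simp add: exp_of_nat_mult[symmetric])
    also have "\<dots> \<le> 3^3" using e_less_272 by (intro power_mono) auto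
    also have "\<dots> \<le> R" using Rge by simp
    finally show ?thesis unfolding L_def using Rpos by (simp add: ln_ge_iff)
  qed
  have sR: "R = real n * s / real (a*b)" using a b unfolding R_def s_def by (simp add: field_simps)
  have s2: "s \<ge> 2" using a b unfolding s_def by simp
  have st1: "l * (s * \<rho>) = 10 * s * L" using rho20 unfolding l_def by (simp add: field_simps)
  have "exp ((L/2) * (20/\<rho>)) \<le> 1 + (L/2) * (20/\<rho>) + (20/\<rho>)\<^sup>2 * (exp (L/2) - 1 - L/2)"
    by (rule exp_quad_bound) (use L3 rho20 in auto)
  moreover have "(L/2) * (20/\<rho>) = l" unfolding l_def by simp
  ultimately have "exp l - 1 - l \<le> (20/\<rho>)\<^sup>2 * (exp (L/2) - 1 - L/2)" by simp
  also have "\<dots> \<le> (20/\<rho>)\<^sup>2 * exp (L/2)" using L3 by (intro mult_left_mono) auto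
  finally have g: "exp l - 1 - l \<le> 400 / \<rho>\<^sup>2 * exp (L/2)" by (simp add: power_divide)
  have eL2: "exp (L/2) = sqrt R"
  proof -
    have "exp (L/2)^2 = R" using expL by (simp flip: exp_of_nat_mult)
    then show ?thesis by (metis abs_of_nonneg exp_ge_zero real_sqrt_abs)
  qed
  have sqR: "sqrt R \<ge> 1000"
  proof -
    have "sqrt R \<ge> sqrt (10^6)" using Rge by (intro real_sqrt_le_mono) simp
    then show ?thesis by (simp add: real_sqrt_power[symmetric] power_mult[symmetric])
  qed
  have "real (a*b) * \<tau>\<^sup>2 * (exp l - 1 - l) \<le> real (a*b) * \<tau>\<^sup>2 * (400 / \<rho>\<^sup>2 * sqrt R)"
    using g eL2 by (intro mult_left_mono) auto
  also have "\<dots> = 400 * (real (a*b) / real n) * sqrt R"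
    using taupos npos unfolding \<rho>_def by (simp add: field_simps power_mult_distrib)
  also have "real (a*b) / real n = s / R" using sR npos s2 a b Rpos by (simp add: field_simps)
  also have "400 * (s / R) * sqrt R = 400 * s / sqrt R"
    using Rpos by (simp add: field_simps)
  also have "\<dots> \<le> 400 * s / 1000" using sqR s2 Rpos by (intro divide_left_mono) auto
  finally have st2: "real (a*b) * \<tau>\<^sup>2 * (exp l - 1 - l) \<le> 2/5 * s" by simp
  have cb: "real (n choose a) * real (n choose b) \<le> exp (s * (1 + L))"
  proof -
    have "real (n choose a) \<le> (exp 1 * real n / real a) ^ a" by (rule choose_le_exp_bound[OF a])
    also have "\<dots> \<le> (exp 1 * R) ^ a"
      using a b npos unfolding R_def by (intro power_mono) (auto simp: field_simps)
    finally have 1: "real (n choose a) \<le> (exp 1 * R) ^ a" .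
    have "real (n choose b) \<le> (exp 1 * real n / real b) ^ b" by (rule choose_le_exp_bound[OF b])
    also have "\<dots> \<le> (exp 1 * R) ^ b"
      using a b npos unfolding R_def by (intro power_mono) (auto simp: field_simps)
    finally have 2: "real (n choose b) \<le> (exp 1 * R) ^ b" .
    have "real (n choose a) * real (n choose b) \<le> (exp 1 * R) ^ a * (exp 1 * R) ^ b"
      using 1 2 by (intro mult_mono) auto
    also have "\<dots> = (exp 1 * R) ^ (a+b)" by (simp add: power_add)
    also have "exp 1 * R = exp (1 + L)" using expL by (simp add: exp_add)
    also have "exp (1 + L) ^ (a+b) = exp (s * (1 + L))" unfolding s_def by (simp flip: exp_of_nat_mult)
    finally show ?thesis .
  qed
  have ex: "2 * exp (- l * (s * \<rho>) + real (a*b) * \<tau>\<^sup>2 * (exp l - 1 - l)) \<le> 2 * exp (- (10 * s * L) + 2/5 * s)"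
  proof -
    have "- l * (s * \<rho>) + real (a*b) * \<tau>\<^sup>2 * (exp l - 1 - l) \<le> - (10 * s * L) + 2/5 * s"
      using st1 st2 by linarith
    then show ?thesis by simp
  qed
  have "real (n choose a) * real (n choose b) * (2 * exp (- l * (s * \<rho>) + real (a*b) * \<tau>\<^sup>2 * (exp l - 1 - l)))
      \<le> exp (s * (1 + L)) * (2 * exp (- (10 * s * L) + 2/5 * s))"
    using cb ex by (intro mult_mono) auto
  also have "\<dots> = exp (s * (1 + L) - 10 * s * L + 2/5 * s + ln 2)"
  proof -
    have "exp (s * (1 + L) - 10 * s * L + 2/5 * s + ln 2) = exp (s * (1 + L)) * exp (- (10 * s * L) + 2/5 * s) * exp (ln 2)"
      unfolding exp_add[symmetric] by (simp add: algebra_simps del: exp_ln_iff exp_ln)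
    then show ?thesis by simp
  qed
  also have "\<dots> \<le> exp (-8 * s * L)"
  proof -
    have "ln (2::real) \<le> 1" using ln_le_minus_one[of 2] by simp
    moreover have "3 * s \<le> L * s" using mult_right_mono[OF L3, of s] s2 by simp
    moreover have "s * (1 + L) = s + L * s" "10 * s * L = 10 * (L * s)" "-8 * s * L = -8 * (L * s)"
      by (simp_all add: algebra_simps)
    ultimately have "s * (1 + L) - 10 * s * L + 2/5 * s + ln 2 \<le> -8 * s * L"
      using s2 by linarith
    then show ?thesis by simp
  qed
  finally show ?thesis unfolding l_def \<rho>_def L_def R_def s_def by simp
qed



theorem mainTheorem6:
  fixes P :: "'a measure" and X :: "nat \<Rightarrow> nat \<Rightarrow> 'a \<Rightarrow> real"
    and n n1 n2 :: nat and \<sigma> :: real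
  assumes "prob_space P"
    and "n1 > 0" and "n2 > 0" and "n > 0"
    and "real n1 \<le> real n / 10^6" and "real n2 \<le> real n / 10^6"
    and "\<sigma> \<ge> 20 / sqrt (real n)"
    and rv: "\<And>i j. i < n \<Longrightarrow> j < n \<Longrightarrow> X i j \<in> borel_measurable P"
    and indep: "prob_space.indep_vars P (\<lambda>_. borel) (\<lambda>(i, j). X i j) ({0..<n} \<times> {0..<n})"
    and mean: "\<And>i j. i < n \<Longrightarrow> j < n \<Longrightarrow> prob_space.expectation P (X i j) = 0"
    and var: "\<And>i j. i < n \<Longrightarrow> j < n \<Longrightarrow> prob_space.variance P (X i j) \<le> \<sigma>\<^sup>2"
    and bdd: "\<And>i j. i < n \<Longrightarrow> j < n \<Longrightarrow> (AE \<omega> in P. \<bar>X i j \<omega>\<bar> \<le> 1)"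
  shows "measure P {\<omega> \<in> space P. \<forall>I J. I \<subseteq> {0..<n} \<and> J \<subseteq> {0..<n} \<and> card I = n1 \<and> card J = n2
            \<longrightarrow> \<bar>\<Sum>i\<in>I. \<Sum>j\<in>J. X i j \<omega>\<bar> \<le> real (n1 + n2) * \<sigma> * sqrt (real n)}
         \<ge> 1 - exp (- 8 * real (n1 + n2) * ln (real n / real n1 + real n / real n2))"
proof -
  interpret p: prob_space P by fact
  define A where "A = {I. I \<subseteq> {0..<n} \<and> card I = n1}"
  define B where "B = {J. J \<subseteq> {0..<n} \<and> card J = n2}"
  define \<tau> where "\<tau> = min \<sigma> 1"
  define \<rho> where "\<rho> = \<tau> * sqrt (real n)"
  define L where "L = ln (real n / real n1 + real n / real n2)"
  define l where "l = 10 * L / \<rho>"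
  define t where "t = real (n1 + n2) * \<rho>"
  define B0 where "B0 = exp (- l * t + real (n1*n2) * \<tau>\<^sup>2 * (exp l - 1 - l))"
  define c where "c = real (n1 + n2) * \<sigma> * sqrt (real n)"
  define Y where "Y = (\<lambda>(e::real) k x. e * case_prod X k x)"
  define E where "E = (\<lambda>((I,J),e). {\<omega>\<in>space P. (\<Sum>k\<in>I\<times>J. Y e k \<omega>) \<ge> t})"
  define G where "G = {\<omega> \<in> space P. \<forall>I J. I \<subseteq> {0..<n} \<and> J \<subseteq> {0..<n} \<and> card I = n1 \<and> card J = n2
            \<longrightarrow> \<bar>\<Sum>i\<in>I. \<Sum>j\<in>J. X i j \<omega>\<bar> \<le> c}"
  define Ix where "Ix = (A \<times> B) \<times> {1::real, -1}"
  have n6: "real n \<ge> 10^6" using assms(2,5) by (simp add: field_simps)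
  have sq: "sqrt (real n) \<ge> 1000"
    using real_sqrt_le_mono[OF n6] by (simp add: real_sqrt_power[symmetric] power_mult[symmetric])
  have t1: "20 / sqrt (real n) \<le> \<tau>"
  proof -
    have "20 / sqrt (real n) \<le> 1" using sq by (simp add: divide_le_eq)
    then show ?thesis using assms(7) unfolding \<tau>_def by simp
  qed
  have t2: "\<tau> \<le> 1" unfolding \<tau>_def by simp
  have taupos: "\<tau> > 0" using t1 sq by (smt (verit) divide_pos_pos)
  have tauc: "t \<le> c"
    unfolding t_def c_def \<rho>_def \<tau>_def
    by (simp only: mult.assoc[symmetric], intro mult_right_mono mult_left_mono) auto
  have finA: "finite A" unfolding A_def by (rule finite_subset[of _ "Pow {0..<n}"]) auto
  have finB: "finite B" unfolding B_def by (rule finite_subset[of _ "Pow {0..<n}"]) auto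
  have cardA: "card A = n choose n1" unfolding A_def using n_subsets[of "{0..<n}" n1] by simp
  have cardB: "card B = n choose n2" unfolding B_def using n_subsets[of "{0..<n}" n2] by simp
  have finIx: "finite Ix" unfolding Ix_def using finA finB by simp
  have cardIx: "card Ix = (n choose n1) * (n choose n2) * 2"
    unfolding Ix_def using finA finB cardA cardB by (simp add: card_cartesian_product)
  have Xm[measurable]: "\<And>i j. i < n \<Longrightarrow> j < n \<Longrightarrow> X i j \<in> borel_measurable P" by (rule rv)
  have Ym: "Y e k \<in> borel_measurable P" if "k \<in> {0..<n} \<times> {0..<n}" for e k
    using that unfolding Y_def by (cases k) (auto intro!: borel_measurable_times rv)
  have Esets: "E q \<in> sets P" if qI: "q \<in> Ix" for q
  proof -
    obtain I J e where q: "q = ((I,J),e)" and I: "I \<subseteq> {0..<n}" and J: "J \<subseteq> {0..<n}"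
      using qI unfolding Ix_def A_def B_def by auto
    have sm: "(\<lambda>\<omega>. \<Sum>k\<in>I\<times>J. Y e k \<omega>) \<in> borel_measurable P"
    proof (intro borel_measurable_sum)
      fix k assume "k \<in> I \<times> J"
      then have "k \<in> {0..<n} \<times> {0..<n}" using I J by blast
      then show "Y e k \<in> borel_measurable P" by (rule Ym)
    qed
    show ?thesis unfolding q E_def using sm by (simp add: borel_measurable_iff_ge)
  qed
  have Ebound: "p.prob (E q) \<le> B0" if qI: "q \<in> Ix" for q
  proof -
    obtain I J e where q: "q = ((I,J),e)" and I: "I \<in> A" and J: "J \<in> B" and e: "e \<in> {1,-1}"
      using qI unfolding Ix_def by auto
    have IJ: "I \<times> J \<subseteq> {0..<n} \<times> {0..<n}" using I J unfolding A_def B_def by auto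
    have finIJ: "finite (I \<times> J)" using IJ by (rule finite_subset) auto
    have cIJ: "card (I \<times> J) = n1 * n2" using I J unfolding A_def B_def by (simp add: card_cartesian_product)
    have ind: "p.indep_vars (\<lambda>_. borel) (Y e) (I \<times> J)"
    proof -
      have "p.indep_vars (\<lambda>_. borel) (\<lambda>(i, j). X i j) (I \<times> J)"
        by (rule p.indep_vars_subset[OF indep IJ])
      from p.indep_vars_compose2[OF this, of "\<lambda>_ x. e * x" "\<lambda>_. borel"]
      show ?thesis unfolding Y_def by (simp add: case_prod_beta')
    qed
    have "p.prob {x\<in>space P. (\<Sum>k\<in>I\<times>J. Y e k x) \<ge> t} \<le> exp (- l * t + real (card (I\<times>J)) * \<tau>\<^sup>2 * (exp l - 1 - l))"
    proof (rule p.bennett_tail[OF finIJ ind])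
      fix k assume k: "k \<in> I \<times> J"
      then obtain i j where k': "k = (i,j)" "i < n" "j < n" using IJ by auto
      have ae: "AE x in P. \<bar>X i j x\<bar> \<le> 1" using bdd k' by auto
      show "AE x in P. \<bar>Y e k x\<bar> \<le> 1"
        using ae by eventually_elim (use e k' in \<open>auto simp: Y_def abs_mult\<close>)
      show "p.expectation (Y e k) = 0"
        using mean[OF k'(2,3)] k' by (simp add: Y_def)
      have "p.expectation (\<lambda>x. (Y e k x)\<^sup>2) = p.expectation (\<lambda>x. (X i j x)\<^sup>2)"
        using e k' by (auto simp: Y_def power_mult_distrib)
      also have "\<dots> \<le> \<tau>\<^sup>2"
      proof -
        have "p.expectation (\<lambda>x. (X i j x)\<^sup>2) \<le> \<sigma>\<^sup>2" using var[OF k'(2,3)] mean[OF k'(2,3)] by simp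
        moreover have "p.expectation (\<lambda>x. (X i j x)\<^sup>2) \<le> 1"
        proof (rule p.integral_le_const)
          have ae2: "AE x in P. norm ((X i j x)\<^sup>2) \<le> 1"
            using ae by eventually_elim (simp add: abs_square_le_1)
          have m2: "(\<lambda>x. (X i j x)\<^sup>2) \<in> borel_measurable P" using rv[OF k'(2,3)] by measurable
          show "integrable P (\<lambda>x. (X i j x)\<^sup>2)"
            by (rule p.integrable_const_bound[OF ae2 m2])
          show "AE x in P. (X i j x)\<^sup>2 \<le> 1"
            using ae by eventually_elim (auto simp: abs_square_le_1)
        qed
        ultimately show ?thesis unfolding \<tau>_def by (cases "\<sigma> \<le> 1") (auto simp: min_def)
      qed
      finally show "p.expectation (\<lambda>x. (Y e k x)\<^sup>2) \<le> \<tau>\<^sup>2" .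
    next
      have "real n / real n1 \<ge> 1" "real n / real n2 \<ge> 1"
        using assms(2,3,5,6) n6 by (simp_all add: field_simps)
      then have "L > 0" unfolding L_def by (intro ln_gt_zero) simp
      moreover have "\<rho> > 0" unfolding \<rho>_def using taupos assms(4) by simp
      ultimately show "l > 0" unfolding l_def by simp
    qed
    then show ?thesis unfolding q E_def B0_def cIJ by simp
  qed
  define S where "S = (\<lambda>IJ \<omega>. \<Sum>i\<in>fst IJ. \<Sum>j\<in>snd IJ. X i j \<omega>)"
  have Geq: "G = {\<omega> \<in> space P. \<forall>IJ\<in>A\<times>B. \<bar>S IJ \<omega>\<bar> \<le> c}"
    unfolding G_def A_def B_def S_def by auto
  have Gsets: "G \<in> sets P"
    unfolding Geq
  proof (rule sets.sets_Collect_finite_All)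
    show "finite (A \<times> B)" using finA finB by simp
    fix IJ assume IJ: "IJ \<in> A \<times> B"
    have "S IJ \<in> borel_measurable P"
      unfolding S_def
    proof (intro borel_measurable_sum)
      fix i j assume "i \<in> fst IJ" "j \<in> snd IJ"
      then have "i < n" "j < n" using IJ unfolding A_def B_def by auto
      then show "X i j \<in> borel_measurable P" by (rule rv)
    qed
    then show "{\<omega> \<in> space P. \<bar>S IJ \<omega>\<bar> \<le> c} \<in> sets P" by measurable
  qed
  have sub: "space P - G \<subseteq> (\<Union>q\<in>Ix. E q)"
  proof
    fix \<omega> assume w: "\<omega> \<in> space P - G"
    then obtain I J where I: "I \<in> A" and J: "J \<in> B" and gt: "\<bar>\<Sum>i\<in>I. \<Sum>j\<in>J. X i j \<omega>\<bar> > c"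
      unfolding G_def A_def B_def by auto
    have fin: "finite I" "finite J" using I J unfolding A_def B_def by (auto intro: finite_subset)
    have sY: "(\<Sum>k\<in>I\<times>J. Y e k \<omega>) = e * (\<Sum>i\<in>I. \<Sum>j\<in>J. X i j \<omega>)" for e
      unfolding Y_def by (simp add: sum.cartesian_product case_prod_beta' sum_distrib_left)
    have "t \<le> (\<Sum>k\<in>I\<times>J. Y 1 k \<omega>) \<or> t \<le> (\<Sum>k\<in>I\<times>J. Y (-1) k \<omega>)"
      using gt tauc unfolding sY by auto
    then show "\<omega> \<in> (\<Union>q\<in>Ix. E q)"
      using w I J unfolding Ix_def E_def by (auto intro!: bexI[where x="((I,J),1)"] bexI[where x="((I,J),-1)"])
  qed
  have Uset: "(\<Union>q\<in>Ix. E q) \<in> sets P" using finIx Esets by auto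
  have "p.prob (space P - G) \<le> p.prob (\<Union>q\<in>Ix. E q)"
    by (rule p.finite_measure_mono[OF sub Uset])
  also have "\<dots> \<le> (\<Sum>q\<in>Ix. p.prob (E q))"
    by (rule p.finite_measure_subadditive_finite[OF finIx]) (use Esets in auto)
  also have "\<dots> \<le> (\<Sum>q\<in>Ix. B0)" by (rule sum_mono) (rule Ebound)
  also have "\<dots> = real (n choose n1) * real (n choose n2) * (2 * B0)" using cardIx by simp
  also have "\<dots> \<le> exp (- 8 * real (n1 + n2) * ln (real n / real n1 + real n / real n2))"
    using final_arith[OF assms(2,3,5,6) t1 t2]
    unfolding B0_def l_def t_def \<rho>_def L_def by simp
  finally have "p.prob (space P - G) \<le> exp (- 8 * real (n1 + n2) * ln (real n / real n1 + real n / real n2))" .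
  moreover have "p.prob (space P - G) = 1 - p.prob G" by (rule p.prob_compl[OF Gsets])
  ultimately show ?thesis unfolding G_def c_def by simp
qed

end
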